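(* Let $(A,\mathit{Con},\mid\!\sim)$ be an abstract nonmonotonic system and $(B,\mathit{Con}^*,\Delta)$ the normal default structure constructed from it as described in the context. For every $P\in\mathit{Con}$, every extension of $P$ in $(B,\mathit{Con}^*,\Delta)$ is of the form $\widetilde{Q}\cup\{[Q]\}$ for some $Q\in\mathit{Con}$ with $Q\subseteq P\subseteq\widetilde{Q}$.
   Context: An abstract nonmonotonic system is a triple $(A,\mathit{Con},\mid\!\sim)$ where $\mathit{Con}$ is a collection of finite subsets of $A$ and $\mid\!\sim\ \subseteq\mathit{Con}\times\mathit{Con}$, satisfying: (1) $X\subseteq Y\in\mathit{Con}\Rightarrow X\in\mathit{Con}$; (2) $a\in A\Rightarrow\{a\}\in\mathit{Con}$; (3) $X\mid\!\sim T\Rightarrow X\cup T\in\mathit{Con}$; (4) $Y\subseteq X\Rightarrow X\mid\!\sim Y$; (5) $X\mid\!\sim T$ and $T\cup X\mid\!\sim Y$ imply $X\mid\!\sim Y$; (6) $X\mid\!\sim Y$ and $X\mid\!\sim Z$ imply $X\mid\!\sim Y\cup Z$. Write $X\mid\!\sim a$ for $X\mid\!\sim\{a\}$, and $\widetilde{X}:=\{t\mid X\mid\!\sim\{t\}\}$. Construction: $B:=A\cup\{[X]\mid X\in\mathit{Con}\}$, where $[X]$ are new pairwise distinct tokens. $\Delta:=\{\frac{X:[X]}{[X]}\mid X\in\mathit{Con}\}\cup\{\frac{\{[X]\}:a}{a}\mid X\mid\!\sim a,\ a\notin X\}$. For finite $W\subseteq B$, $W\in\mathit{Con}^*$ iff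 (i) $W\cap A\in\mathit{Con}$; (ii) $W$ contains at most one token of the form $[X]$; (iii) if $[X]\in W$ then $X\mid\!\sim W\setminus\{[X]\}$. An arbitrary subset of $B$ is consistent if all its finite subsets are in $\mathit{Con}^*$. Extensions in $(B,\mathit{Con}^*,\Delta)$: for consistent $x\subseteq B$ and $S\subseteq B$, $\phi(x,S,0)=x$, $\phi(x,S,i+1)=\phi(x,S,i)\cup\{a\mid\frac{X:a}{a}\in\Delta,\ X\subseteq\phi(x,S,i),\ \{a\}\cup S\text{ consistent}\}$, $\Phi(x,S)=\bigcup_i\phi(x,S,i)$; $y$ is an extension of $x$ if $\Phi(x,y)=y$. *)

theory Defs
  imports Main
begin

text \<open>Abstract nonmonotonic system (A, Con, R) with R the relation written |~.\<close>
definition ans_system :: "'a set \<Rightarrow> 'a set set \<Rightarrow> ('a set \<Rightarrow> 'a set \<Rightarrow> bool) \<Rightarrow> bool" where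
  "ans_system A Con R \<longleftrightarrow>
     (\<forall>X\<in>Con. finite X \<and> X \<subseteq> A) \<and>
     (\<forall>X Y. R X Y \<longrightarrow> X \<in> Con \<and> Y \<in> Con) \<and>
     (\<forall>X Y. X \<subseteq> Y \<and> Y \<in> Con \<longrightarrow> X \<in> Con) \<and>
     (\<forall>a\<in>A. {a} \<in> Con) \<and>
     (\<forall>X T. R X T \<longrightarrow> X \<union> T \<in> Con) \<and>
     (\<forall>X Y. X \<in> Con \<and> Y \<subseteq> X \<longrightarrow> R X Y) \<and>
     (\<forall>X T Y. R X T \<and> R (T \<union> X) Y \<longrightarrow> R X Y) \<and>
     (\<forall>X Y Z. R X Y \<and> R X Z \<longrightarrow> R X (Y \<union> Z))"

definition tilde :: "('a set \<Rightarrow> 'a set \<Rightarrow> bool) \<Rightarrow> 'a set \<Rightarrow> 'a set" where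
  "tilde R X = {t. R X {t}}"

text \<open>Tokens of B: original elements of A, and new tokens [X].\<close>
datatype 'a tok = Atom 'a | Brk "'a set"

definition Bset :: "'a set \<Rightarrow> 'a set set \<Rightarrow> 'a tok set" where
  "Bset A Con = Atom ` A \<union> Brk ` Con"

definition atoms :: "'a tok set \<Rightarrow> 'a set" where
  "atoms W = {a. Atom a \<in> W}"

text \<open>Normal defaults X:a/a represented as pairs (X, a).\<close>
definition Delta :: "'a set set \<Rightarrow> ('a set \<Rightarrow> 'a set \<Rightarrow> bool) \<Rightarrow> ('a tok set \<times> 'a tok) set" where
  "Delta Con R = {(Atom ` X, Brk X) | X. X \<in> Con}
                \<union> {({Brk X}, Atom a) | X a. R X {a} \<and> a \<notin> X}"

definition ConStar :: "'a set \<Rightarrow> 'a set set \<Rightarrow> ('a set \<Rightarrow> 'a set \<Rightarrow> bool) \<Rightarrow> 'a tok set \<Rightarrow> bool" where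
  "ConStar A Con R W \<longleftrightarrow> finite W \<and> W \<subseteq> Bset A Con \<and>
     atoms W \<in> Con \<and>
     (\<forall>X Y. Brk X \<in> W \<and> Brk Y \<in> W \<longrightarrow> X = Y) \<and>
     (\<forall>X. Brk X \<in> W \<longrightarrow> R X (atoms (W - {Brk X})))"

definition consistent :: "'a set \<Rightarrow> 'a set set \<Rightarrow> ('a set \<Rightarrow> 'a set \<Rightarrow> bool) \<Rightarrow> 'a tok set \<Rightarrow> bool" where
  "consistent A Con R x \<longleftrightarrow> x \<subseteq> Bset A Con \<and> (\<forall>W. finite W \<and> W \<subseteq> x \<longrightarrow> ConStar A Con R W)"

fun phi :: "'a set \<Rightarrow> 'a set set \<Rightarrow> ('a set \<Rightarrow> 'a set \<Rightarrow> bool) \<Rightarrow> 'a tok set \<Rightarrow> 'a tok set \<Rightarrow> nat \<Rightarrow> 'a tok set" where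
  "phi A Con R x S 0 = x"
| "phi A Con R x S (Suc i) = phi A Con R x S i \<union>
     {a. \<exists>X. (X, a) \<in> Delta Con R \<and> X \<subseteq> phi A Con R x S i \<and> consistent A Con R ({a} \<union> S)}"

definition Phi :: "'a set \<Rightarrow> 'a set set \<Rightarrow> ('a set \<Rightarrow> 'a set \<Rightarrow> bool) \<Rightarrow> 'a tok set \<Rightarrow> 'a tok set \<Rightarrow> 'a tok set" where
  "Phi A Con R x S = (\<Union>i. phi A Con R x S i)"

definition is_extension :: "'a set \<Rightarrow> 'a set set \<Rightarrow> ('a set \<Rightarrow> 'a set \<Rightarrow> bool) \<Rightarrow> 'a tok set \<Rightarrow> 'a tok set \<Rightarrow> bool" where
  "is_extension A Con R x y \<longleftrightarrow> consistent A Con R x \<and> Phi A Con R x y = y"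

end

theory Submission
  imports Defs
begin

lemma ans_facts:
  assumes "ans_system A Con R"
  shows "\<And>X. X \<in> Con \<Longrightarrow> finite X \<and> X \<subseteq> A"
    and "\<And>X Y. R X Y \<Longrightarrow> X \<in> Con \<and> Y \<in> Con"
    and "\<And>X Y. X \<subseteq> Y \<Longrightarrow> Y \<in> Con \<Longrightarrow> X \<in> Con"
    and "\<And>X T. R X T \<Longrightarrow> X \<union> T \<in> Con"
    and "\<And>X Y. X \<in> Con \<Longrightarrow> Y \<subseteq> X \<Longrightarrow> R X Y"
    and "\<And>X T Y. R X T \<Longrightarrow> R (T \<union> X) Y \<Longrightarrow> R X Y"
    and "\<And>X Y Z. R X Y \<Longrightarrow> R X Z \<Longrightarrow> R X (Y \<union> Z)"
proof -
  have h: "(\<forall>X\<in>Con. finite X \<and> X \<subseteq> A) \<and>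
     (\<forall>X Y. R X Y \<longrightarrow> X \<in> Con \<and> Y \<in> Con) \<and>
     (\<forall>X Y. X \<subseteq> Y \<and> Y \<in> Con \<longrightarrow> X \<in> Con) \<and>
     (\<forall>a\<in>A. {a} \<in> Con) \<and>
     (\<forall>X T. R X T \<longrightarrow> X \<union> T \<in> Con) \<and>
     (\<forall>X Y. X \<in> Con \<and> Y \<subseteq> X \<longrightarrow> R X Y) \<and>
     (\<forall>X T Y. R X T \<and> R (T \<union> X) Y \<longrightarrow> R X Y) \<and>
     (\<forall>X Y Z. R X Y \<and> R X Z \<longrightarrow> R X (Y \<union> Z))"
    using assms unfolding ans_system_def .
  show "\<And>X. X \<in> Con \<Longrightarrow> finite X \<and> X \<subseteq> A" using h[THEN conjunct1] by blast
  show "\<And>X Y. R X Y \<Longrightarrow> X \<in> Con \<and> Y \<in> Con" using h[THEN conjunct2, THEN conjunct1] by blast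
  show "\<And>X Y. X \<subseteq> Y \<Longrightarrow> Y \<in> Con \<Longrightarrow> X \<in> Con" using h[THEN conjunct2, THEN conjunct2, THEN conjunct1] by blast
  show "\<And>X T. R X T \<Longrightarrow> X \<union> T \<in> Con" using h[THEN conjunct2, THEN conjunct2, THEN conjunct2, THEN conjunct2, THEN conjunct1] by blast
  show "\<And>X Y. X \<in> Con \<Longrightarrow> Y \<subseteq> X \<Longrightarrow> R X Y" using h[THEN conjunct2, THEN conjunct2, THEN conjunct2, THEN conjunct2, THEN conjunct2, THEN conjunct1] by blast
  show "\<And>X T Y. R X T \<Longrightarrow> R (T \<union> X) Y \<Longrightarrow> R X Y" using h[THEN conjunct2, THEN conjunct2, THEN conjunct2, THEN conjunct2, THEN conjunct2, THEN conjunct2, THEN conjunct1] by blast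
  show "\<And>X Y Z. R X Y \<Longrightarrow> R X Z \<Longrightarrow> R X (Y \<union> Z)" using h[THEN conjunct2, THEN conjunct2, THEN conjunct2, THEN conjunct2, THEN conjunct2, THEN conjunct2, THEN conjunct2] by blast
qed

lemma fin_tilde:
  assumes "ans_system A Con R" "Q \<in> Con" "finite T"
  shows "T \<subseteq> tilde R Q \<Longrightarrow> R Q T"
  using assms(3)
proof (induction T rule: finite_induct)
  case empty
  then show ?case using ans_facts(5)[OF assms(1) assms(2)] by blast
next
  case (insert t F)
  then have "R Q {t}" "R Q F" by (auto simp: tilde_def)
  then show ?case using ans_facts(7)[OF assms(1), of Q "{t}" F] by simp
qed

lemma atoms_image[simp]: "atoms (Atom ` S) = S"
  by (auto simp: atoms_def)

lemma tilde_A: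
  assumes "ans_system A Con R"
  shows "tilde R Q \<subseteq> A"
proof
  fix t assume "t \<in> tilde R Q"
  then have "R Q {t}" by (simp add: tilde_def)
  then have "{t} \<in> Con" using ans_facts(2)[OF assms] by blast
  then show "t \<in> A" using ans_facts(1)[OF assms] by blast
qed

lemma cons_tilde:
  assumes "ans_system A Con R" "Q \<in> Con"
  shows "consistent A Con R (Atom ` tilde R Q \<union> {Brk Q})"
  unfolding consistent_def
proof (intro conjI allI impI)
  have TB: "Atom ` tilde R Q \<union> {Brk Q} \<subseteq> Bset A Con"
    using tilde_A[OF assms(1)] assms(2) by (auto simp: Bset_def)
  then show "Atom ` tilde R Q \<union> {Brk Q} \<subseteq> Bset A Con" .
  fix W assume W: "finite W \<and> W \<subseteq> Atom ` tilde R Q \<union> {Brk Q}"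
  have fa: "finite (atoms W)"
  proof -
    have "Atom ` atoms W \<subseteq> W" by (auto simp: atoms_def)
    then have "finite (Atom ` atoms W)" using W finite_subset by blast
    then show ?thesis by (simp add: finite_image_iff inj_on_def)
  qed
  have sub: "atoms W \<subseteq> tilde R Q" using W by (auto simp: atoms_def)
  have RQ: "R Q (atoms W)" using fin_tilde[OF assms fa sub] .
  then have "Q \<union> atoms W \<in> Con" using ans_facts(4)[OF assms(1)] by blast
  then have "atoms W \<in> Con" using ans_facts(3)[OF assms(1)] by blast
  moreover have "W \<subseteq> Bset A Con"
    using W TB by blast
  moreover have "\<forall>X Y. Brk X \<in> W \<and> Brk Y \<in> W \<longrightarrow> X = Y" using W by auto
  moreover have "atoms (W - {Brk Q}) = atoms W" by (auto simp: atoms_def)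
  moreover have "\<forall>X. Brk X \<in> W \<longrightarrow> X = Q" using W by auto
  ultimately show "ConStar A Con R W" unfolding ConStar_def using W RQ by auto
qed

lemma consistent_mono:
  "consistent A Con R S \<Longrightarrow> S' \<subseteq> S \<Longrightarrow> consistent A Con R S'"
  unfolding consistent_def by blast

lemma phi_mono: "phi A Con R x S i \<subseteq> phi A Con R x S (i + k)"
  by (induction k) auto

lemma phi_Phi: "phi A Con R x S i \<subseteq> Phi A Con R x S"
  unfolding Phi_def by blast

theorem lemma4:
  fixes A :: "'a set" and Con :: "'a set set" and R :: "'a set \<Rightarrow> 'a set \<Rightarrow> bool"
  assumes "ans_system A Con R"
    and "P \<in> Con"
    and "is_extension A Con R (Atom ` P) y"
  shows "\<exists>Q\<in>Con. y = Atom ` tilde R Q \<union> {Brk Q} \<and> Q \<subseteq> P \<and> P \<subseteq> tilde R Q"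
proof -
  note ax = ans_facts[OF assms(1)]
  define ph where "ph = phi A Con R (Atom ` P) y"
  have xcons: "consistent A Con R (Atom ` P)" and yPhi: "(\<Union>i. ph i) = y"
    using assms(3) by (auto simp: is_extension_def Phi_def ph_def)
  have ph0: "ph 0 = Atom ` P" by (simp add: ph_def)
  have phS: "\<And>i. ph (Suc i) = ph i \<union> {a. \<exists>X. (X, a) \<in> Delta Con R \<and> X \<subseteq> ph i \<and> consistent A Con R ({a} \<union> y)}"
    by (simp add: ph_def)
  have phy: "\<And>i. ph i \<subseteq> y" using yPhi by blast
  have Py: "Atom ` P \<subseteq> y" using phy[of 0] ph0 by simp
  have PA: "P \<subseteq> A" "finite P" using ax(1) assms(2) by auto
  have ycons: "consistent A Con R y"
  proof (rule ccontr)
    assume nc: "\<not> consistent A Con R y"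
    have "\<And>a. \<not> consistent A Con R ({a} \<union> y)"
      using nc consistent_mono by blast
    then have "\<And>i. ph i = Atom ` P"
    proof -
      fix i show "ph i = Atom ` P"
        using \<open>\<And>a. \<not> consistent A Con R ({a} \<union> y)\<close> by (induction i) (auto simp: ph0 phS)
    qed
    then have "y = Atom ` P" using yPhi by auto
    then show False using nc xcons by simp
  qed
  have noBrk: "(\<forall>X. Brk X \<notin> ph i) \<longrightarrow> ph i \<subseteq> Atom ` P" for i
  proof (induction i)
    case 0 then show ?case by (simp add: ph0)
  next
    case (Suc i)
    show ?case
    proof
      assume nb: "\<forall>X. Brk X \<notin> ph (Suc i)"
      then have nbi: "\<forall>X. Brk X \<notin> ph i" using phS by blast
      show "ph (Suc i) \<subseteq> Atom ` P"
      proof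
        fix z assume z: "z \<in> ph (Suc i)"
        show "z \<in> Atom ` P"
        proof (cases "z \<in> ph i")
          case True then show ?thesis using Suc nbi by blast
        next
          case False
          then obtain X where X: "(X, z) \<in> Delta Con R" "X \<subseteq> ph i"
            using z phS by auto
          from X(1) show ?thesis
          proof (unfold Delta_def, elim UnE CollectE exE conjE)
            fix X' assume "(X, z) = (Atom ` X', Brk X')"
            then show ?thesis using nb z by auto
          next
            fix X' a assume "(X, z) = ({Brk X'}, Atom a)"
            then show ?thesis using nbi X(2) by auto
          qed
        qed
      qed
    qed
  qed
  have "\<exists>Q. Brk Q \<in> y"
  proof (rule ccontr)
    assume nb: "\<not> (\<exists>Q. Brk Q \<in> y)"
    then have "\<And>i. ph i \<subseteq> Atom ` P" using noBrk phy by blast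
    then have yP: "y = Atom ` P" using yPhi Py by blast
    have "consistent A Con R ({Brk P} \<union> y)"
      unfolding consistent_def
    proof (intro conjI allI impI)
      have TB: "{Brk P} \<union> y \<subseteq> Bset A Con" using yP PA assms(2) by (auto simp: Bset_def)
      then show "{Brk P} \<union> y \<subseteq> Bset A Con" .
      fix W assume W: "finite W \<and> W \<subseteq> {Brk P} \<union> y"
      have sub: "atoms W \<subseteq> P" using W yP by (auto simp: atoms_def)
      have "atoms W \<in> Con" using ax(3)[OF sub assms(2)] .
      moreover have "W \<subseteq> Bset A Con" using W TB by blast
      moreover have "\<forall>X Y. Brk X \<in> W \<and> Brk Y \<in> W \<longrightarrow> X = Y" using W yP by auto
      moreover have "R P (atoms (W - {Brk P}))"
        using ax(5)[OF assms(2)] sub by (auto simp: atoms_def)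
      moreover have "\<forall>X. Brk X \<in> W \<longrightarrow> X = P" using W yP by auto
      ultimately show "ConStar A Con R W" unfolding ConStar_def using W by auto
    qed
    moreover have "(Atom ` P, Brk P) \<in> Delta Con R" using assms(2) by (auto simp: Delta_def)
    ultimately have "Brk P \<in> ph (Suc 0)" using ph0 phS[of 0] by auto
    then show False using nb phy by blast
  qed
  then obtain Q where BQ: "Brk Q \<in> y" by blast
  have ycall: "\<And>W. finite W \<Longrightarrow> W \<subseteq> y \<Longrightarrow> ConStar A Con R W"
    using ycons unfolding consistent_def by blast
  have uniq: "\<And>X. Brk X \<in> y \<Longrightarrow> X = Q"
  proof -
    fix X assume "Brk X \<in> y"
    then have "{Brk X, Brk Q} \<subseteq> y" using BQ by blast
    then have "ConStar A Con R {Brk X, Brk Q}" by (intro ycall) simp_all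
    then have "\<forall>U V. Brk U \<in> {Brk X, Brk Q} \<and> Brk V \<in> {Brk X, Brk Q} \<longrightarrow> U = V"
      unfolding ConStar_def by (elim conjE)
    then show "X = Q" by blast
  qed
  have QCon: "Q \<in> Con" using ycons BQ unfolding consistent_def Bset_def by auto
  have "\<exists>n. Brk Q \<in> ph n" using BQ yPhi by blast
  define n where "n = (LEAST n. Brk Q \<in> ph n)"
  have n1: "Brk Q \<in> ph n" unfolding n_def using \<open>\<exists>n. Brk Q \<in> ph n\<close> by (rule LeastI_ex)
  have n0: "n \<noteq> 0" using n1 ph0 by auto
  then obtain m where m: "n = Suc m" using not0_implies_Suc by blast
  have "Brk Q \<notin> ph m"
  proof
    assume "Brk Q \<in> ph m"
    then have "n \<le> m" unfolding n_def by (rule Least_le)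
    with m show False by simp
  qed
  then have nbm: "\<forall>X. Brk X \<notin> ph m" using uniq phy by blast
  then have phm: "ph m \<subseteq> Atom ` P" using noBrk by blast
  obtain X where X: "(X, Brk Q) \<in> Delta Con R" "X \<subseteq> ph m"
    using n1 m phS[of m] \<open>Brk Q \<notin> ph m\<close> by auto
  have "X = Atom ` Q" using X(1) by (auto simp: Delta_def)
  then have QP: "Q \<subseteq> P" using X(2) phm by auto
  have "ConStar A Con R (Atom ` P \<union> {Brk Q})"
    using ycons Py BQ PA unfolding consistent_def by auto
  then have RQP: "R Q (atoms (Atom ` P \<union> {Brk Q} - {Brk Q}))" unfolding ConStar_def by auto
  have "atoms (Atom ` P \<union> {Brk Q} - {Brk Q}) = P" by (auto simp: atoms_def)
  with RQP have RQP': "R Q P" by simp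
  have Pt: "P \<subseteq> tilde R Q"
  proof
    fix p assume p: "p \<in> P"
    have "P \<union> Q \<in> Con" using ax(4)[OF RQP'] by (simp add: Un_commute)
    then have "R (P \<union> Q) {p}" using ax(5) p by blast
    then show "p \<in> tilde R Q" using ax(6)[OF RQP'] by (simp add: tilde_def)
  qed
  have atomsy: "Atom b \<in> ph i \<Longrightarrow> b \<in> tilde R Q" for b i
  proof (induction i)
    case 0 then show ?case using ph0 Pt by auto
  next
    case (Suc i)
    show ?case
    proof (cases "Atom b \<in> ph i")
      case True then show ?thesis using Suc by blast
    next
      case False
      then obtain X where X: "(X, Atom b) \<in> Delta Con R" "X \<subseteq> ph i"
        using Suc.prems phS by auto
      then obtain X' where "X = {Brk X'}" "R X' {b}" by (auto simp: Delta_def)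
      moreover then have "X' = Q" using X(2) phy uniq by blast
      ultimately show ?thesis by (simp add: tilde_def)
    qed
  qed
  have ysub: "y \<subseteq> Atom ` tilde R Q \<union> {Brk Q}"
  proof
    fix z assume z: "z \<in> y"
    show "z \<in> Atom ` tilde R Q \<union> {Brk Q}"
    proof (cases z)
      case (Atom b)
      then obtain i where "Atom b \<in> ph i" using z yPhi by blast
      then show ?thesis using atomsy Atom by blast
    next
      case (Brk X) then show ?thesis using uniq z by auto
    qed
  qed
  have ctil: "consistent A Con R (Atom ` tilde R Q \<union> {Brk Q})" using cons_tilde[OF assms(1) QCon] .
  have supy: "Atom ` tilde R Q \<subseteq> y"
  proof
    fix z assume "z \<in> Atom ` tilde R Q"
    then obtain t where t: "z = Atom t" "R Q {t}" by (auto simp: tilde_def)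
    show "z \<in> y"
    proof (cases "t \<in> Q")
      case True then show ?thesis using t QP Py by auto
    next
      case False
      then have D: "({Brk Q}, Atom t) \<in> Delta Con R" using t by (auto simp: Delta_def)
      have "consistent A Con R ({Atom t} \<union> y)"
        using consistent_mono[OF ctil] ysub t by (auto simp: tilde_def)
      then have "Atom t \<in> ph (Suc n)" using D n1 phS[of n] by blast
      then show ?thesis using t phy by blast
    qed
  qed
  show ?thesis using QCon QP Pt ysub supy BQ by blast
qed

end
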